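(* Let $p=\sum_{k=1}^K f_k$ and $q=\sum_{j=1}^J g_j$ be keypoint distributions on $\mathbb{R}^d$ that are partners. Then the set of local maxima of $\max(p,q)$ equals the union of the sets of local maxima of $p$ and of $q$, namely $\{\mu_{f_k}\}_{k=1}^K\cup\{\mu_{g_j}\}_{j=1}^J$.
   Context: "Local maximum" of a function $h:\mathbb{R}^d\to\mathbb{R}$ means a strict local maximum: a point $y$ with a neighbourhood $U$ such that $h(x)<h(y)$ for all $x\in U\setminus\{y\}$. A keypoint is a $\mathcal{C}^2$ function $f:\mathbb{R}^d\to[0,\infty)$ with compact support that is unimodal: it has exactly one local maximum, denoted $\mu_f$, which is also its global maximizer, $\mu_f=\operatorname{argmax}_x f(x)$. A keypoint $f$ is subsumed by a keypoint $g$ if there is no neighbourhood $\mathcal{X}$ of $\mu_f$ such that $f(x)\ge g(x)$ for all $x\in\mathcal{X}$. Two keypoints $f,g$ are partners if neither is subsumed by the other. A keypoint distribution is a function $p=\sum_{k=1}^K f_k$ where the $f_k$ are keypoints with pairwise disjoint supports. Two keypoint distributions $p=\sum_k f_k$ and $q=\sum_j g_j$ are partners if $f_k$ and $g_j$ are partner keypoints for every $k$ and $j$. *)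

theory Defs
  imports "HOL-Analysis.Analysis"
begin

definition strict_local_max :: "('a::real_normed_vector \<Rightarrow> real) \<Rightarrow> 'a \<Rightarrow> bool" where
  "strict_local_max h y \<longleftrightarrow> (\<exists>U. open U \<and> y \<in> U \<and> (\<forall>x\<in>U - {y}. h x < h y))"

definition C2 :: "('a::euclidean_space \<Rightarrow> real) \<Rightarrow> bool" where
  "C2 f \<longleftrightarrow> (\<exists>(Df :: 'a \<Rightarrow> 'a \<Rightarrow>\<^sub>L real) (D2f :: 'a \<Rightarrow> 'a \<Rightarrow>\<^sub>L ('a \<Rightarrow>\<^sub>L real)).
      (\<forall>x. (f has_derivative blinfun_apply (Df x)) (at x)) \<and>
      (\<forall>x. (Df has_derivative blinfun_apply (D2f x)) (at x)) \<and>
      continuous_on UNIV D2f)"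

definition fsupp :: "('a::real_normed_vector \<Rightarrow> real) \<Rightarrow> 'a set" where
  "fsupp f = closure {x. f x \<noteq> 0}"

definition keypoint :: "('a::euclidean_space \<Rightarrow> real) \<Rightarrow> bool" where
  "keypoint f \<longleftrightarrow> C2 f \<and> (\<forall>x. 0 \<le> f x) \<and> compact (fsupp f) \<and>
     (\<exists>!y. strict_local_max f y) \<and>
     (\<forall>y. strict_local_max f y \<longrightarrow> (\<forall>x. f x \<le> f y))"

definition kp_mu :: "('a::euclidean_space \<Rightarrow> real) \<Rightarrow> 'a" where
  "kp_mu f = (THE y. strict_local_max f y)"

definition subsumed :: "('a::euclidean_space \<Rightarrow> real) \<Rightarrow> ('a \<Rightarrow> real) \<Rightarrow> bool" where
  "subsumed f g \<longleftrightarrow> \<not> (\<exists>X. open X \<and> kp_mu f \<in> X \<and> (\<forall>x\<in>X. g x \<le> f x))"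

definition kp_partners :: "('a::euclidean_space \<Rightarrow> real) \<Rightarrow> ('a \<Rightarrow> real) \<Rightarrow> bool" where
  "kp_partners f g \<longleftrightarrow> \<not> subsumed f g \<and> \<not> subsumed g f"

definition keypoint_family :: "'i set \<Rightarrow> ('i \<Rightarrow> 'a::euclidean_space \<Rightarrow> real) \<Rightarrow> bool" where
  "keypoint_family I F \<longleftrightarrow> finite I \<and> (\<forall>k\<in>I. keypoint (F k)) \<and>
     (\<forall>k\<in>I. \<forall>k'\<in>I. k \<noteq> k' \<longrightarrow> fsupp (F k) \<inter> fsupp (F k') = {})"

definition kd :: "'i set \<Rightarrow> ('i \<Rightarrow> 'a::euclidean_space \<Rightarrow> real) \<Rightarrow> 'a \<Rightarrow> real" where
  "kd I F = (\<lambda>x. \<Sum>k\<in>I. F k x)"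

definition kd_partners :: "'i set \<Rightarrow> ('i \<Rightarrow> 'a::euclidean_space \<Rightarrow> real) \<Rightarrow>
    'j set \<Rightarrow> ('j \<Rightarrow> 'a \<Rightarrow> real) \<Rightarrow> bool" where
  "kd_partners I F J G \<longleftrightarrow> (\<forall>k\<in>I. \<forall>j\<in>J. kp_partners (F k) (G j))"

end

theory Submission
  imports Defs
begin

lemma closed_fsupp: "closed (fsupp f)"
  unfolding fsupp_def by simp

lemma notin_fsupp: "x \<notin> fsupp f \<Longrightarrow> f x = 0"
proof (rule ccontr)
  assume a: "x \<notin> fsupp f" "f x \<noteq> 0"
  then have "x \<in> {x. f x \<noteq> 0}" by simp
  then have "x \<in> closure {x. f x \<noteq> 0}" by (rule subsetD[OF closure_subset])
  then show False using a(1) unfolding fsupp_def by simp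
qed

lemma kp_mu_max:
  assumes "keypoint f" shows "strict_local_max f (kp_mu f)"
proof -
  from assms have "\<exists>!y. strict_local_max f y" unfolding keypoint_def by blast
  then show ?thesis unfolding kp_mu_def by (rule theI')
qed

lemma kp_mu_unique:
  assumes "keypoint f" "strict_local_max f y" shows "y = kp_mu f"
proof -
  from assms have "\<exists>!y. strict_local_max f y" unfolding keypoint_def by blast
  then show ?thesis using assms(2) kp_mu_max[OF assms(1)] by blast
qed

lemma exists_other:
  fixes y :: "'a::euclidean_space"
  assumes "open W" "y \<in> W" shows "\<exists>x\<in>W. x \<noteq> y"
proof (rule ccontr)
  assume "\<not> ?thesis"
  then have "W = {y}" using assms by blast
  then show False using assms(1) not_open_singleton[of y] by simp
qed

lemma kp_mu_supp:
  assumes "keypoint f" shows "kp_mu f \<in> fsupp f"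
proof (rule ccontr)
  assume a: "kp_mu f \<notin> fsupp f"
  then have z: "f (kp_mu f) = 0" by (rule notin_fsupp)
  from kp_mu_max[OF assms] obtain U where U: "open U" "kp_mu f \<in> U"
    "\<forall>x\<in>U - {kp_mu f}. f x < f (kp_mu f)" unfolding strict_local_max_def by blast
  obtain x where "x \<in> U" "x \<noteq> kp_mu f" using exists_other[OF U(1,2)] by blast
  then have "f x < 0" using U z by auto
  moreover have "0 \<le> f x" using assms unfolding keypoint_def by blast
  ultimately show False by linarith
qed

lemma slm_local:
  assumes "open W" "y \<in> W" "\<forall>x\<in>W. h x = g x" "strict_local_max g y"
  shows "strict_local_max h y"
proof -
  obtain U where U: "open U" "y \<in> U" "\<forall>x\<in>U - {y}. g x < g y"
    using assms(4) unfolding strict_local_max_def by blast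
  have "\<forall>x\<in>(U \<inter> W) - {y}. h x < h y"
  proof
    fix x assume x: "x \<in> (U \<inter> W) - {y}"
    then have "g x < g y" using U by blast
    moreover have "h x = g x" "h y = g y" using x assms by auto
    ultimately show "h x < h y" by simp
  qed
  moreover have "open (U \<inter> W)" "y \<in> U \<inter> W" using U assms by auto
  ultimately show ?thesis unfolding strict_local_max_def by blast
qed

lemma local_eq:
  assumes "keypoint_family I F" "k \<in> I" "y \<in> fsupp (F k)"
  shows "\<exists>W. open W \<and> y \<in> W \<and> (\<forall>x\<in>W. kd I F x = F k x)"
proof -
  let ?W = "- (\<Union>k'\<in>I - {k}. fsupp (F k'))"
  have fin: "finite I" using assms(1) unfolding keypoint_family_def by blast
  have "closed (\<Union>k'\<in>I - {k}. fsupp (F k'))"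
    using fin by (intro closed_UN) (auto simp: closed_fsupp)
  then have oW: "open ?W" by (rule open_Compl)
  have disj: "\<forall>k'\<in>I. k' \<noteq> k \<longrightarrow> fsupp (F k) \<inter> fsupp (F k') = {}"
    using assms(1,2) unfolding keypoint_family_def by blast
  then have "\<forall>k'\<in>I - {k}. y \<notin> fsupp (F k')" using assms(3) by blast
  then have yW: "y \<in> ?W" by simp
  have eq: "\<forall>x\<in>?W. kd I F x = F k x"
  proof
    fix x assume x: "x \<in> ?W"
    have "kd I F x = F k x + (\<Sum>k'\<in>I - {k}. F k' x)"
      unfolding kd_def using fin assms(2) by (simp add: sum.remove)
    also have "(\<Sum>k'\<in>I - {k}. F k' x) = 0"
    proof (rule sum.neutral, rule ballI)
      fix k' assume "k' \<in> I - {k}"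
      then have "x \<notin> fsupp (F k')" using x by blast
      then show "F k' x = 0" by (rule notin_fsupp)
    qed
    finally show "kd I F x = F k x" by simp
  qed
  show ?thesis by (rule exI[of _ ?W]) (use oW yW eq in simp)
qed

lemma local_zero:
  assumes "keypoint_family I F" "\<forall>k\<in>I. y \<notin> fsupp (F k)"
  shows "\<exists>W. open W \<and> y \<in> W \<and> (\<forall>x\<in>W. kd I F x = 0)"
proof -
  let ?W = "- (\<Union>k'\<in>I. fsupp (F k'))"
  have fin: "finite I" using assms(1) unfolding keypoint_family_def by blast
  have "closed (\<Union>k'\<in>I. fsupp (F k'))"
    using fin by (intro closed_UN) (auto simp: closed_fsupp)
  then have "open ?W" by (rule open_Compl)
  moreover have "y \<in> ?W" using assms(2) by simp
  moreover have "\<forall>x\<in>?W. kd I F x = 0"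
  proof
    fix x assume "x \<in> ?W"
    then have "\<forall>k\<in>I. x \<notin> fsupp (F k)" by simp
    then have "\<forall>k\<in>I. F k x = 0" by (simp add: notin_fsupp)
    then show "kd I F x = 0" unfolding kd_def by simp
  qed
  ultimately show ?thesis by blast
qed

lemma slm_kd:
  assumes "keypoint_family I F"
  shows "strict_local_max (kd I F) y \<longleftrightarrow> (\<exists>k\<in>I. y = kp_mu (F k))"
proof
  assume s: "strict_local_max (kd I F) y"
  then obtain U where U: "open U" "y \<in> U" "\<forall>x\<in>U - {y}. kd I F x < kd I F y"
    unfolding strict_local_max_def by blast
  show "\<exists>k\<in>I. y = kp_mu (F k)"
  proof (cases "\<exists>k\<in>I. y \<in> fsupp (F k)")
    case True
    then obtain k where k: "k \<in> I" "y \<in> fsupp (F k)" by blast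
    obtain W where W: "open W" "y \<in> W" "\<forall>x\<in>W. kd I F x = F k x"
      using local_eq[OF assms k] by blast
    have "strict_local_max (F k) y"
      using slm_local[of W y "F k" "kd I F"] W s by auto
    moreover have "keypoint (F k)" using assms k unfolding keypoint_family_def by blast
    ultimately show ?thesis using kp_mu_unique k by blast
  next
    case False
    obtain W where W: "open W" "y \<in> W" "\<forall>x\<in>W. kd I F x = 0"
      using local_zero[OF assms] False by blast
    obtain x where x: "x \<in> U \<inter> W" "x \<noteq> y" using exists_other[of "U \<inter> W" y] U W by auto
    then have "kd I F x < kd I F y" using U by blast
    moreover have "kd I F x = 0" "kd I F y = 0" using x W by auto
    ultimately show ?thesis by simp
  qed
next
  assume "\<exists>k\<in>I. y = kp_mu (F k)"
  then obtain k where k: "k \<in> I" "y = kp_mu (F k)" by blast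
  have kp: "keypoint (F k)" using assms k unfolding keypoint_family_def by blast
  obtain W where W: "open W" "y \<in> W" "\<forall>x\<in>W. kd I F x = F k x"
    using local_eq[OF assms k(1)] kp_mu_supp[OF kp] k by blast
  show "strict_local_max (kd I F) y"
    using slm_local[of W y "kd I F" "F k"] W kp_mu_max[OF kp] k by auto
qed

lemma slm_max_sub:
  assumes "strict_local_max (\<lambda>x. max (p x) (q x)) y"
  shows "strict_local_max p y \<or> strict_local_max q y"
proof -
  obtain U where U: "open U" "y \<in> U" "\<forall>x\<in>U - {y}. max (p x) (q x) < max (p y) (q y)"
    using assms unfolding strict_local_max_def by blast
  show ?thesis
  proof (cases "q y \<le> p y")
    case True
    then have "\<forall>x\<in>U - {y}. p x < p y" using U(3) by force
    then show ?thesis using U unfolding strict_local_max_def by blast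
  next
    case False
    then have "\<forall>x\<in>U - {y}. q x < q y" using U(3) by force
    then show ?thesis using U unfolding strict_local_max_def by blast
  qed
qed

lemma dominate:
  assumes kf: "keypoint f" and GJ: "keypoint_family J G"
    and P: "\<forall>j\<in>J. \<not> subsumed f (G j)" and y: "y = kp_mu f"
  shows "\<exists>W. open W \<and> y \<in> W \<and> (\<forall>x\<in>W. kd J G x \<le> f x)"
proof -
  have fin: "finite J" using GJ unfolding keypoint_family_def by blast
  have "\<forall>j\<in>J. \<exists>X. open X \<and> y \<in> X \<and> (\<forall>x\<in>X. G j x \<le> f x)"
    using P y unfolding subsumed_def by blast
  then obtain X where X0: "\<forall>j\<in>J. open (X j) \<and> y \<in> X j \<and> (\<forall>x\<in>X j. G j x \<le> f x)"
    by (rule bchoice[THEN exE]) blast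
  have X: "open (X j) \<and> y \<in> X j \<and> (\<forall>x\<in>X j. G j x \<le> f x)" if "j \<in> J" for j
    using X0 that by blast
  let ?X = "\<Inter>j\<in>J. X j"
  have oX: "open ?X" using fin X by (intro open_INT) blast+
  have yX: "y \<in> ?X" using X by blast
  show ?thesis
  proof (cases "\<exists>j\<in>J. y \<in> fsupp (G j)")
    case True
    then obtain j where j: "j \<in> J" "y \<in> fsupp (G j)" by blast
    obtain W where W: "open W" "y \<in> W" "\<forall>x\<in>W. kd J G x = G j x"
      using local_eq[OF GJ j] by blast
    have "\<forall>x\<in>W \<inter> ?X. kd J G x \<le> f x"
    proof
      fix x assume x: "x \<in> W \<inter> ?X"
      then have "x \<in> X j" using j by blast
      then have "G j x \<le> f x" using X[OF j(1)] by blast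
      moreover have "kd J G x = G j x" using W x by blast
      ultimately show "kd J G x \<le> f x" by simp
    qed
    moreover have "open (W \<inter> ?X)" using W oX by blast
    moreover have "y \<in> W \<inter> ?X" using W yX by blast
    ultimately show ?thesis by blast
  next
    case False
    obtain W where W: "open W" "y \<in> W" "\<forall>x\<in>W. kd J G x = 0"
      using local_zero[OF GJ] False by blast
    have "\<forall>x. 0 \<le> f x" using kf unfolding keypoint_def by blast
    then have "\<forall>x\<in>W. kd J G x \<le> f x" using W by simp
    then show ?thesis using W by blast
  qed
qed

theorem mainTheorem4:
  fixes I :: "'i set" and J :: "'j set"
    and F :: "'i \<Rightarrow> 'a::euclidean_space \<Rightarrow> real" and G :: "'j \<Rightarrow> 'a \<Rightarrow> real"
  assumes "keypoint_family I F" and "keypoint_family J G"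
    and "kd_partners I F J G"
  shows "{y. strict_local_max (\<lambda>x. max (kd I F x) (kd J G x)) y}
           = {y. strict_local_max (kd I F) y} \<union> {y. strict_local_max (kd J G) y}
       \<and> {y. strict_local_max (kd I F) y} \<union> {y. strict_local_max (kd J G) y}
           = (\<lambda>k. kp_mu (F k)) ` I \<union> (\<lambda>j. kp_mu (G j)) ` J"
proof
  note FI = assms(1) and GJ = assms(2)
  have A: "strict_local_max (\<lambda>x. max (kd I F x) (kd J G x)) y"
    if s: "strict_local_max (kd I F) y" for y
  proof -
    obtain k where k: "k \<in> I" "y = kp_mu (F k)" using s slm_kd[OF FI] by blast
    have kp: "keypoint (F k)" using FI k unfolding keypoint_family_def by blast
    have P: "\<forall>j\<in>J. \<not> subsumed (F k) (G j)"
      using assms(3) k unfolding kd_partners_def kp_partners_def by blast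
    obtain W1 where W1: "open W1" "y \<in> W1" "\<forall>x\<in>W1. kd J G x \<le> F k x"
      using dominate[OF kp GJ P k(2)] by blast
    obtain W where W: "open W" "y \<in> W" "\<forall>x\<in>W. kd I F x = F k x"
      using local_eq[OF FI k(1)] kp_mu_supp[OF kp] k by blast
    have eq: "\<forall>x\<in>W \<inter> W1. max (kd I F x) (kd J G x) = F k x"
    proof
      fix x assume x: "x \<in> W \<inter> W1"
      then have "kd J G x \<le> F k x" "kd I F x = F k x" using W W1 by blast+
      then show "max (kd I F x) (kd J G x) = F k x" by simp
    qed
    have o: "open (W \<inter> W1)" using W W1 by blast
    have yy: "y \<in> W \<inter> W1" using W W1 by blast
    have sl: "strict_local_max (F k) y" using kp_mu_max[OF kp] k(2) by simp
    show ?thesis by (rule slm_local[OF o yy eq sl])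
  qed
  have B: "strict_local_max (\<lambda>x. max (kd I F x) (kd J G x)) y"
    if s: "strict_local_max (kd J G) y" for y
  proof -
    obtain k where k: "k \<in> J" "y = kp_mu (G k)" using s slm_kd[OF GJ] by blast
    have kp: "keypoint (G k)" using GJ k unfolding keypoint_family_def by blast
    have P: "\<forall>j\<in>I. \<not> subsumed (G k) (F j)"
      using assms(3) k unfolding kd_partners_def kp_partners_def by blast
    obtain W1 where W1: "open W1" "y \<in> W1" "\<forall>x\<in>W1. kd I F x \<le> G k x"
      using dominate[OF kp FI P k(2)] by blast
    obtain W where W: "open W" "y \<in> W" "\<forall>x\<in>W. kd J G x = G k x"
      using local_eq[OF GJ k(1)] kp_mu_supp[OF kp] k by blast
    have eq: "\<forall>x\<in>W \<inter> W1. max (kd I F x) (kd J G x) = G k x"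
    proof
      fix x assume x: "x \<in> W \<inter> W1"
      then have "kd I F x \<le> G k x" "kd J G x = G k x" using W W1 by blast+
      then show "max (kd I F x) (kd J G x) = G k x" by simp
    qed
    have o: "open (W \<inter> W1)" using W W1 by blast
    have yy: "y \<in> W \<inter> W1" using W W1 by blast
    have sl: "strict_local_max (G k) y" using kp_mu_max[OF kp] k(2) by simp
    show ?thesis by (rule slm_local[OF o yy eq sl])
  qed
  show "{y. strict_local_max (\<lambda>x. max (kd I F x) (kd J G x)) y}
           = {y. strict_local_max (kd I F) y} \<union> {y. strict_local_max (kd J G) y}"
  proof (rule set_eqI)
    fix y show "y \<in> {y. strict_local_max (\<lambda>x. max (kd I F x) (kd J G x)) y} \<longleftrightarrow>
      y \<in> {y. strict_local_max (kd I F) y} \<union> {y. strict_local_max (kd J G) y}"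
      unfolding Un_iff mem_Collect_eq using A[of y] B[of y] slm_max_sub[of "kd I F" "kd J G" y] by blast
  qed
  show "{y. strict_local_max (kd I F) y} \<union> {y. strict_local_max (kd J G) y}
           = (\<lambda>k. kp_mu (F k)) ` I \<union> (\<lambda>j. kp_mu (G j)) ` J"
  proof (rule set_eqI)
    fix y show "y \<in> {y. strict_local_max (kd I F) y} \<union> {y. strict_local_max (kd J G) y} \<longleftrightarrow>
      y \<in> (\<lambda>k. kp_mu (F k)) ` I \<union> (\<lambda>j. kp_mu (G j)) ` J"
      by (simp only: Un_iff mem_Collect_eq image_iff slm_kd[OF FI] slm_kd[OF GJ])
  qed
qed

end
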